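(* Let $(p_n)_{n \ge 1}$ be a strictly increasing sequence of prime numbers and fix $\ell \in \mathbb{N}$. Then $M = \left\langle \frac{1}{p_i p_{i+\ell}} \;\middle|\; i \in \mathbb{N} \right\rangle$ is an atomic weak reciprocal Puiseux monoid that does not satisfy the ascending chain condition on principal ideals (ACCP).
   Context: A Puiseux monoid is an additive submonoid of $(\mathbb{Q}_{\ge 0},+)$. A weak reciprocal Puiseux monoid is one of the form $\langle \frac{1}{d_n} \mid n \in \mathbb{N}\rangle$ for a strictly increasing sequence $(d_n)_{n\ge1}$ of positive integers. An atom of $M$ is a nonzero element $a$ such that $a=x+y$ with $x,y\in M$ forces $x=0$ or $y=0$; $M$ is atomic if each element is a finite sum of atoms. A principal ideal of $M$ is a set $r + M = \{r+q \mid q\in M\}$ with $r \in M$; $M$ satisfies the ACCP if every ascending chain of principal ideals is eventually constant. *)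

theory Defs
  imports Complex_Main "HOL-Computational_Algebra.Primes"
begin

inductive_set monoid_gen :: "rat set \<Rightarrow> rat set" for S :: "rat set" where
  zero: "0 \<in> monoid_gen S"
| add: "s \<in> S \<Longrightarrow> x \<in> monoid_gen S \<Longrightarrow> s + x \<in> monoid_gen S"

definition puiseux_monoid :: "rat set \<Rightarrow> bool" where
  "puiseux_monoid M \<longleftrightarrow> M \<subseteq> {0..} \<and> 0 \<in> M \<and> (\<forall>x\<in>M. \<forall>y\<in>M. x + y \<in> M)"

definition weak_reciprocal_pm :: "rat set \<Rightarrow> bool" where
  "weak_reciprocal_pm M \<longleftrightarrow>
     (\<exists>d :: nat \<Rightarrow> nat. strict_mono d \<and> (\<forall>n. 0 < d n) \<and>
        M = monoid_gen (range (\<lambda>n. 1 / of_nat (d n))))"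

definition is_atom :: "rat set \<Rightarrow> rat \<Rightarrow> bool" where
  "is_atom M a \<longleftrightarrow> a \<in> M \<and> a \<noteq> 0 \<and>
     (\<forall>x\<in>M. \<forall>y\<in>M. a = x + y \<longrightarrow> x = 0 \<or> y = 0)"

definition atomic_pm :: "rat set \<Rightarrow> bool" where
  "atomic_pm M \<longleftrightarrow> (\<forall>x\<in>M. x \<in> monoid_gen {a. is_atom M a})"

definition principal_ideal :: "rat set \<Rightarrow> rat \<Rightarrow> rat set" where
  "principal_ideal M r = {r + q | q. q \<in> M}"

definition ACCP :: "rat set \<Rightarrow> bool" where
  "ACCP M \<longleftrightarrow> (\<forall>f :: nat \<Rightarrow> rat.
     (\<forall>n. f n \<in> M) \<and> (\<forall>n. principal_ideal M (f n) \<subseteq> principal_ideal M (f (Suc n))) \<longrightarrow>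
     (\<exists>N. \<forall>n\<ge>N. principal_ideal M (f n) = principal_ideal M (f N)))"

end

theory Submission
  imports Defs
begin

lemma mg_add: "x \<in> monoid_gen S \<Longrightarrow> y \<in> monoid_gen S \<Longrightarrow> x + y \<in> monoid_gen S"
  by (induction x rule: monoid_gen.induct) (auto simp: add.assoc intro: monoid_gen.intros)

lemma mg_nonneg: "x \<in> monoid_gen S \<Longrightarrow> S \<subseteq> {0..} \<Longrightarrow> x \<ge> 0"
  by (induction x rule: monoid_gen.induct) auto

lemma mg_mono: "x \<in> monoid_gen S \<Longrightarrow> S \<subseteq> T \<Longrightarrow> x \<in> monoid_gen T"
  by (induction x rule: monoid_gen.induct) (auto intro: monoid_gen.intros)

lemma mg_small: "x \<in> monoid_gen S \<Longrightarrow> S \<subseteq> {0..} \<Longrightarrow> x \<in> monoid_gen {s\<in>S. s \<le> x}"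
proof (induction x rule: monoid_gen.induct)
  case zero show ?case by (rule monoid_gen.zero)
next
  case (add s x)
  have "x \<ge> 0" using mg_nonneg add by blast
  have "s \<ge> 0" using add by auto
  then have "{t\<in>S. t \<le> x} \<subseteq> {t\<in>S. t \<le> s + x}" by auto
  then have "x \<in> monoid_gen {t\<in>S. t \<le> s + x}"
    by (rule mg_mono[OF add.IH[OF add.prems]])
  moreover have "s \<in> {t\<in>S. t \<le> s + x}" using add \<open>x \<ge> 0\<close> by auto
  ultimately show ?case by (blast intro: monoid_gen.add)
qed

lemma mg_mult: "s \<in> S \<Longrightarrow> of_nat c * s \<in> monoid_gen S"
proof (induction c)
  case 0 then show ?case by (simp add: monoid_gen.zero)
next
  case (Suc c)
  then have "s + of_nat c * s \<in> monoid_gen S" by (intro monoid_gen.add) auto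
  then show ?case by (simp add: algebra_simps)
qed

theorem proposition4p7:
  fixes p :: "nat \<Rightarrow> nat" and l :: nat
  assumes "strict_mono p" and "\<forall>n. prime (p n)" and "l \<ge> 1"
  shows "puiseux_monoid (monoid_gen (range (\<lambda>i. 1 / of_nat (p i * p (i + l)))))
       \<and> weak_reciprocal_pm (monoid_gen (range (\<lambda>i. 1 / of_nat (p i * p (i + l)))))
       \<and> atomic_pm (monoid_gen (range (\<lambda>i. 1 / of_nat (p i * p (i + l)))))
       \<and> \<not> ACCP (monoid_gen (range (\<lambda>i. 1 / of_nat (p i * p (i + l)))))"
proof -
  define a :: "nat \<Rightarrow> rat" where "a = (\<lambda>i. 1 / of_nat (p i * p (i + l)))"
  define M where "M = monoid_gen (range a)"
  have pp: "p n > 1" for n using assms(2) prime_gt_1_nat by blast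
  have dpos: "p i * p (i + l) > 0" for i using pp[of i] pp[of "i+l"] by simp
  have dmono: "strict_mono (\<lambda>i. p i * p (i + l))"
  proof (rule strict_monoI)
    fix m n :: nat assume "m < n"
    then have "p m < p n" "p (m+l) < p (n+l)" using assms(1) by (auto simp: strict_mono_less)
    then show "p m * p (m + l) < p n * p (n + l)" using dpos[of m]
      using mult_strict_mono[of "p m" "p n" "p (m+l)" "p (n+l)"] by simp
  qed
  have apos: "a i > 0" for i using dpos[of i] unfolding a_def by simp
  have nonneg: "range a \<subseteq> {0..}" using apos by (auto intro: less_imp_le)
  have Mnn: "x \<in> M \<Longrightarrow> x \<ge> 0" for x using mg_nonneg[OF _ nonneg] M_def by blast
  have amono: "a j < a i \<Longrightarrow> i < j" for i j
  proof (rule ccontr)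
    assume "a j < a i" "\<not> i < j"
    then have "j \<le> i" by simp
    then have "p j * p (j + l) \<le> p i * p (i + l)"
      using strict_mono_less_eq[OF dmono, of j i] by simp
    then have le: "rat_of_nat (p j * p (j + l)) \<le> rat_of_nat (p i * p (i + l))"
      by (simp only: of_nat_le_iff)
    have pos: "0 < rat_of_nat (p i * p (i + l)) * rat_of_nat (p j * p (j + l))"
      using dpos[of i] dpos[of j] by (simp only: of_nat_0_less_iff mult_pos_pos)
    have "a i \<le> a j" unfolding a_def
      by (rule divide_left_mono[OF le _ pos]) simp
    with \<open>a j < a i\<close> show False by simp
  qed
  have P1: "puiseux_monoid M"
    unfolding puiseux_monoid_def M_def using mg_nonneg[OF _ nonneg] mg_add monoid_gen.zero by blast
  have P2: "weak_reciprocal_pm M"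
    unfolding weak_reciprocal_pm_def M_def a_def using dmono dpos by blast
  have cop: "x \<in> monoid_gen (a ` {i<..}) \<Longrightarrow> \<exists>n::int. \<exists>D::nat. D > 0 \<and> coprime D (p i) \<and> x = of_int n / of_nat D" for x i
  proof (induction x rule: monoid_gen.induct)
    case zero then show ?case by (intro exI[of _ 0] exI[of _ 1]) auto
  next
    case (add s x)
    then obtain j where j: "j > i" "s = a j" by auto
    from add.IH obtain n D where nD: "D > 0" "coprime D (p i)" "x = of_int n / of_nat D" by blast
    have "p i < p j" "p i < p (j + l)" using j assms(1) by (auto simp: strict_mono_less)
    then have "coprime (p j) (p i)" "coprime (p (j+l)) (p i)"
      using assms(2) by (auto intro!: primes_coprime)
    then have c: "coprime (p j * p (j + l) * D) (p i)" using nD by simp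
    have e: "s + x = of_int (int D + n * int (p j * p (j + l))) / of_nat (p j * p (j + l) * D)"
      using nD dpos[of j] unfolding j a_def by (simp add: field_simps)
    have "p j * p (j + l) * D > 0" using nD dpos[of j] by simp
    then show ?case using c e by blast
  qed
  have atom: "is_atom M (a i)" for i
  proof -
    have "a i \<in> M" unfolding M_def by (auto intro: monoid_gen.intros mg_mult[of _ _ 1, simplified])
    moreover have "a i \<noteq> 0" using apos[of i] by simp
    moreover have "x = 0 \<or> y = 0" if xy: "x \<in> M" "y \<in> M" "a i = x + y" for x y
    proof (rule ccontr)
      assume "\<not> (x = 0 \<or> y = 0)"
      then have "x > 0" "y > 0" using Mnn xy by (auto simp: order_le_less)
      then have lt: "x < a i" "y < a i" using xy by auto
      have sub: "z \<in> M \<Longrightarrow> z < a i \<Longrightarrow> z \<in> monoid_gen (a ` {i<..})" for z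
      proof -
        assume "z \<in> M" "z < a i"
        then have "z \<in> monoid_gen {s \<in> range a. s \<le> z}" using mg_small[OF _ nonneg] M_def by blast
        moreover have "{s \<in> range a. s \<le> z} \<subseteq> a ` {i<..}"
        proof
          fix t assume "t \<in> {s \<in> range a. s \<le> z}"
          then obtain j where "t = a j" "a j \<le> z" by auto
          then have "a j < a i" using \<open>z < a i\<close> by simp
          then have "i < j" by (rule amono)
          then show "t \<in> a ` {i<..}" using \<open>t = a j\<close> by simp
        qed
        ultimately show ?thesis by (rule mg_mono)
      qed
      have "a i \<in> monoid_gen (a ` {i<..})" using xy(3) sub[OF xy(1) lt(1)] sub[OF xy(2) lt(2)] mg_add by simp
      then obtain n D where nD: "D > 0" "coprime D (p i)" "a i = of_int n / of_nat D" using cop by blast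
      then have "of_nat D = of_int n * (of_nat (p i * p (i + l)) :: rat)"
        using dpos[of i] unfolding a_def by (simp add: field_simps)
      then have "int D = n * int (p i * p (i + l))"
        by (metis of_int_eq_iff of_int_mult of_int_of_nat_eq)
      then have "int (p i) dvd int D" by simp
      then have "p i dvd D" by simp
      with nD(2) have "is_unit (p i)" by (meson coprime_absorb_left coprime_commute)
      with pp[of i] show False by simp
    qed
    ultimately show ?thesis unfolding is_atom_def by blast
  qed
  have P3: "atomic_pm M"
    unfolding atomic_pm_def M_def
  proof
    fix x assume "x \<in> monoid_gen (range a)"
    then show "x \<in> monoid_gen {b. is_atom (monoid_gen (range a)) b}"
      by (rule mg_mono) (use atom[unfolded M_def] in blast)
  qed
  define f :: "nat \<Rightarrow> rat" where "f k = 1 / of_nat (p (k * l))" for k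
  have fM: "f k \<in> M" for k
  proof -
    have "of_nat (p (k*l + l)) * a (k*l) \<in> M" unfolding M_def by (rule mg_mult) simp
    then show ?thesis using pp[of "k*l+l"] unfolding f_def a_def by simp
  qed
  have fdec: "f (Suc k) < f k" "f k - f (Suc k) \<in> M" for k
  proof -
    have lt: "p (k*l) < p (k*l + l)" using assms(1,3) by (simp add: strict_mono_less)
    then show "f (Suc k) < f k" unfolding f_def using pp[of "k*l"]
      by (simp add: add.commute frac_less2)
    have "of_nat (p (k*l + l) - p (k*l)) * a (k*l) \<in> M" unfolding M_def by (rule mg_mult) simp
    moreover have "of_nat (p (k*l + l) - p (k*l)) * a (k*l) = f k - f (Suc k)"
      using lt pp[of "k*l"] pp[of "k*l+l"] unfolding f_def a_def
      by (simp add: of_nat_diff field_simps add.commute)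
    ultimately show "f k - f (Suc k) \<in> M" by simp
  qed
  have P4: "\<not> ACCP M"
  proof
    assume acc: "ACCP M"
    have h1: "\<forall>n. f n \<in> M" using fM by blast
    have h2: "\<forall>n. principal_ideal M (f n) \<subseteq> principal_ideal M (f (Suc n))"
    proof
    fix n show "principal_ideal M (f n) \<subseteq> principal_ideal M (f (Suc n))"
    proof
      fix z assume "z \<in> principal_ideal M (f n)"
      then obtain q where q: "q \<in> M" "z = f n + q" unfolding principal_ideal_def by blast
      then have zz: "z = f (Suc n) + ((f n - f (Suc n)) + q)" by simp
      have ww: "(f n - f (Suc n)) + q \<in> M"
        using mg_add[OF fdec(2)[of n, unfolded M_def] q(1)[unfolded M_def]] unfolding M_def .
      show "z \<in> principal_ideal M (f (Suc n))" unfolding principal_ideal_def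
        by (rule CollectI, rule exI[of _ "(f n - f (Suc n)) + q"]) (use zz ww in simp)
    qed
    qed
    have "\<exists>N. \<forall>n\<ge>N. principal_ideal M (f n) = principal_ideal M (f N)"
      using acc[unfolded ACCP_def, rule_format, of f] h1 h2 by (simp only: conj_absorb simp_thms)
    then obtain N where N: "\<forall>n\<ge>N. principal_ideal M (f n) = principal_ideal M (f N)" ..
    have "f (Suc N) \<in> principal_ideal M (f (Suc N))"
      unfolding principal_ideal_def M_def by (auto intro: monoid_gen.zero)
    moreover have "principal_ideal M (f (Suc N)) = principal_ideal M (f N)"
      using N[rule_format, of "Suc N"] by simp
    ultimately have "f (Suc N) \<in> principal_ideal M (f N)" by (simp only:)
    then obtain q where "q \<in> M" "f (Suc N) = f N + q" unfolding principal_ideal_def by blast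
    then show False using Mnn[of q] fdec(1)[of N] by simp
  qed
  show ?thesis using P1 P2 P3 P4 unfolding M_def a_def by (simp only: simp_thms)
qed

end
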